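(* Let $S$ be $\mathbb{R}$ or $\mathbb{C}$. Then: (i) $n\mapsto g\big[\mathbf{CP}_n(S)\big]$ is non-decreasing; (ii) $g\big[\mathbf{CP}_{2n}(S)\big]\ge2\,g\big[\mathbf{CP}_n(S)\big]$ for all $n\in\mathbb{N}$; (iii) if $k\ge2$ is an integer, $C>0$, and $g\big[\mathbf{CP}_n(S)\big]\ge Cn$ for all $n=k,\dots,2k-1$, then $g\big[\mathbf{CP}_n(S)\big]\ge\frac{(1/k;1/2)_\infty}{1-1/k}\,Cn$ for all $n\ge k$, where $(x;q)_\infty=\prod_{i=0}^{\infty}(1-xq^i)$.
   Context: For an $n\times n$ complex matrix $A=(a_{i,j})$, Gaussian elimination without pivoting is the recursion $a^{(1)}_{i,j}=a_{i,j}$ and $a^{(k+1)}_{i,j}=a^{(k)}_{i,j}-a^{(k)}_{i,k}a^{(k)}_{k,j}/a^{(k)}_{k,k}$ for $k+1\le i,j\le n$, $k=1,\dots,n-1$ (defined when all pivots are nonzero). Growth factor: $g(A)=\max_{i,j,k}|a^{(k)}_{i,j}|/\max_{i,j}|a_{i,j}|$; for a set $\mathbf{X}$ of matrices, $g[\mathbf{X}]=\sup_{A\in\mathbf{X}}g(A)$. $\mathbf{CP}_n(S)$ is the set of invertible $A\in S^{n\times n}$ for which elimination is defined and $|a^{(k)}_{i,j}|\le|a^{(k)}_{k,k}|$ for all $k$ and all $i,j\ge k$. *)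

theory Defs
  imports "HOL-Analysis.Analysis"
begin

text \<open>An n x n matrix is represented as a function nat => nat => complex, with
  0-based indices i, j < n; entries outside the range are required to be 0.
  Real matrices are complex matrices with all entries in the reals.\<close>

type_synonym cmat = "nat \<Rightarrow> nat \<Rightarrow> complex"

text \<open>Gaussian elimination without pivoting (0-based):
  gauss A k is the matrix a^(k+1) of the paper; its entries are meaningful for k <= i, j.\<close>
fun gauss :: "cmat \<Rightarrow> nat \<Rightarrow> cmat" where
  "gauss A 0 = A"
| "gauss A (Suc k) =
     (\<lambda>i j. gauss A k i j - gauss A k i k * gauss A k k j / gauss A k k k)"

definition invertible_mat :: "nat \<Rightarrow> cmat \<Rightarrow> bool" where
  "invertible_mat n A \<longleftrightarrow> (\<exists>B. \<forall>i<n. \<forall>j<n.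
      (\<Sum>l<n. A i l * B l j) = (if i = j then 1 else 0))"

definition elim_defined :: "nat \<Rightarrow> cmat \<Rightarrow> bool" where
  "elim_defined n A \<longleftrightarrow> (\<forall>k<n. gauss A k k k \<noteq> 0)"

definition CP :: "nat \<Rightarrow> complex set \<Rightarrow> cmat set" where
  "CP n S = {A. (\<forall>i<n. \<forall>j<n. A i j \<in> S)
              \<and> (\<forall>i j. (n \<le> i \<or> n \<le> j) \<longrightarrow> A i j = 0)
              \<and> invertible_mat n A
              \<and> elim_defined n A
              \<and> (\<forall>k<n. \<forall>i j. k \<le> i \<and> i < n \<and> k \<le> j \<and> j < n \<longrightarrow>
                    norm (gauss A k i j) \<le> norm (gauss A k k k))}"

definition growth :: "nat \<Rightarrow> cmat \<Rightarrow> real" where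
  "growth n A =
     Max {norm (gauss A k i j) | k i j. k < n \<and> k \<le> i \<and> i < n \<and> k \<le> j \<and> j < n}
     / Max {norm (A i j) | i j. i < n \<and> j < n}"

definition growth_sup :: "nat \<Rightarrow> cmat set \<Rightarrow> ereal" where
  "growth_sup n X = (SUP A\<in>X. ereal (growth n A))"

definition qpoch_inf :: "real \<Rightarrow> real \<Rightarrow> real" where
  "qpoch_inf x q = (\<Prod>i. 1 - x * q ^ i)"

end

theory Submission
  imports Defs "HOL-Analysis.Analysis"
begin


definition hmat :: "nat \<Rightarrow> nat \<Rightarrow> complex" where
  "hmat a b = (if a = 1 \<and> b = 1 then -1 else 1)"

definition kronH :: "cmat \<Rightarrow> cmat" where
  "kronH A i j = A (i div 2) (j div 2) * hmat (i mod 2) (j mod 2)"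

lemma gauss_kron_odd_from_even:
  assumes "\<And>i j. gauss (kronH A) (2*k) i j = gauss A k (i div 2) (j div 2) * hmat (i mod 2) (j mod 2)"
  shows "gauss (kronH A) (Suc (2*k)) i j = gauss A k (i div 2) (j div 2) * hmat (i mod 2) (j mod 2)
          - gauss A k (i div 2) k * gauss A k k (j div 2) / gauss A k k k"
  by (simp add: assms hmat_def)

lemma gauss_kron_even:
  "gauss (kronH A) (2*k) i j = gauss A k (i div 2) (j div 2) * hmat (i mod 2) (j mod 2)"
proof (induction k arbitrary: i j)
  case 0
  then show ?case by (simp add: kronH_def)
next
  case (Suc k)
  note odd = gauss_kron_odd_from_even[OF Suc.IH]
  define a where "a = gauss A k"
  have e: "2 * Suc k = Suc (Suc (2*k))" by simp
  have d1: "Suc (2*k) div 2 = k" "Suc (2*k) mod 2 = 1" by presburger+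
  have m: "i mod 2 = 0 \<or> i mod 2 = 1" "j mod 2 = 0 \<or> j mod 2 = 1" by presburger+
  show ?case
    unfolding e gauss.simps(2)[of _ "Suc (2*k)"] odd d1
    using m
    by (cases "a k k = 0") (auto simp: hmat_def a_def[symmetric] field_simps)
qed

lemma gauss_kron_odd:
  "gauss (kronH A) (Suc (2*k)) i j = gauss A k (i div 2) (j div 2) * hmat (i mod 2) (j mod 2)
          - gauss A k (i div 2) k * gauss A k k (j div 2) / gauss A k k k"
  by (rule gauss_kron_odd_from_even[OF gauss_kron_even])



lemma sum_2n: "(\<Sum>l<2*n. f l) = (\<Sum>L<n. f (2*L) + f (Suc (2*L)))"
  by (induction n) (simp_all add: sum.distrib add_ac)

lemma hmat_real: "hmat a b \<in> \<real>" by (simp add: hmat_def)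
lemma norm_hmat[simp]: "norm (hmat a b) = 1" by (simp add: hmat_def)

lemma kron_inv:
  assumes inv: "invertible_mat n A"
  shows "invertible_mat (2*n) (kronH A)"
proof -
  from inv obtain A' where A': "\<forall>i<n. \<forall>j<n. (\<Sum>l<n. A i l * A' l j) = (if i = j then 1 else 0)"
    unfolding invertible_mat_def by blast
  define B' where "B' i j = A' (i div 2) (j div 2) * hmat (i mod 2) (j mod 2) / 2" for i j
  have "(\<Sum>l<2*n. kronH A i l * B' l j) = (if i = j then 1 else 0)" if "i < 2*n" "j < 2*n" for i j
  proof -
    have m: "i mod 2 = 0 \<or> i mod 2 = 1" "j mod 2 = 0 \<or> j mod 2 = 1" by presburger+
    have "(\<Sum>l<2*n. kronH A i l * B' l j) =
       (\<Sum>L<n. A (i div 2) L * A' L (j div 2) * (if i mod 2 = j mod 2 then 1 else 0))"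
      unfolding sum_2n
      apply (rule sum.cong, simp)
      using m by (auto simp: kronH_def B'_def hmat_def field_simps)
    also have "\<dots> = (\<Sum>L<n. A (i div 2) L * A' L (j div 2)) * (if i mod 2 = j mod 2 then 1 else 0)"
      by (simp add: sum_distrib_right)
    also have "\<dots> = (if i = j then 1 else 0)"
    proof -
      have "i div 2 < n" "j div 2 < n" using that by auto
      moreover have "(i = j) = (i div 2 = j div 2 \<and> i mod 2 = j mod 2)"
        by (metis div_mult_mod_eq)
      ultimately show ?thesis using A' by auto
    qed
    finally show ?thesis .
  qed
  then show ?thesis unfolding invertible_mat_def by blast
qed

lemma fin_stage: "finite {F k i j | k i j. k < (n::nat) \<and> k \<le> i \<and> i < n \<and> k \<le> j \<and> j < n}"
proof -
  have "{F k i j | k i j. k < n \<and> k \<le> i \<and> i < n \<and> k \<le> j \<and> j < n}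
     \<subseteq> (\<lambda>(k,i,j). F k i j) ` ({..<n} \<times> {..<n} \<times> {..<n})"
  proof (rule subsetI)
    fix x assume "x \<in> {F k i j | k i j. k < n \<and> k \<le> i \<and> i < n \<and> k \<le> j \<and> j < n}"
    then obtain k i j where "x = F k i j" "k<n" "i<n" "j<n" by auto
    then show "x \<in> (\<lambda>(k,i,j). F k i j) ` ({..<n} \<times> {..<n} \<times> {..<n})"
      by (auto intro!: image_eqI[where x="(k,i,j)"])
  qed
  then show ?thesis by (rule finite_subset) (intro finite_imageI finite_cartesian_product, simp_all)
qed

lemma fin_entries: "finite {F i j | i j. i < (n::nat) \<and> j < n}"
proof -
  have "{F i j | i j. i < n \<and> j < n} \<subseteq> (\<lambda>(i,j). F i j) ` ({..<n} \<times> {..<n})" by fastforce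
  then show ?thesis by (rule finite_subset) (intro finite_imageI finite_cartesian_product, simp_all)
qed

lemma kron_CP:
  assumes S: "S = \<real> \<or> S = UNIV" and A: "A \<in> CP n S"
  shows "kronH A \<in> CP (2*n) S"
proof -
  note Ad = A[unfolded CP_def, simplified]
  let ?B = "kronH A"
  have ev: "gauss ?B (2*k) (2*k) (2*k) = gauss A k k k" for k
    by (simp add: gauss_kron_even hmat_def)
  have od: "gauss ?B (Suc (2*k)) (Suc (2*k)) (Suc (2*k)) = - 2 * gauss A k k k" if "gauss A k k k \<noteq> 0" for k
  proof -
    have "Suc (2*k) div 2 = k" "Suc (2*k) mod 2 = 1" by presburger+
    then show ?thesis using that by (simp del: gauss.simps add: gauss_kron_odd hmat_def)
  qed
  have split: "s = 2*(s div 2) \<or> s = Suc (2*(s div 2))" for s::nat by presburger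
  have c1: "\<forall>i<2*n. \<forall>j<2*n. ?B i j \<in> S"
  proof (intro allI impI)
    fix i j assume "i < 2*n" "j < 2*n"
    then have "A (i div 2) (j div 2) \<in> S" using Ad by auto
    then show "?B i j \<in> S" using S hmat_real by (auto simp: kronH_def)
  qed
  have c2: "\<forall>i j. (2*n \<le> i \<or> 2*n \<le> j) \<longrightarrow> ?B i j = 0"
  proof (intro allI impI)
    fix i j assume "2*n \<le> i \<or> 2*n \<le> j"
    then have "n \<le> i div 2 \<or> n \<le> j div 2" by auto
    then show "?B i j = 0" using Ad by (auto simp: kronH_def)
  qed
  have c3: "invertible_mat (2*n) ?B" using kron_inv Ad by blast
  have piv: "gauss A k k k \<noteq> 0" if "k < n" for k using Ad that unfolding elim_defined_def by blast
  have c4: "elim_defined (2*n) ?B"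
    unfolding elim_defined_def
  proof (intro allI impI)
    fix s assume s: "s < 2*n"
    from split[of s] show "gauss ?B s s s \<noteq> 0"
    proof
      assume h: "s = 2*(s div 2)"
      have "s div 2 < n" using s by auto
      then show ?thesis using piv ev h by metis
    next
      assume h: "s = Suc (2*(s div 2))"
      have "s div 2 < n" using s by auto
      then show ?thesis using piv od h by (metis mult_eq_0_iff neg_equal_0_iff_equal zero_neq_numeral)
    qed
  qed
  have c5: "\<forall>s<2*n. \<forall>i j. s \<le> i \<and> i < 2*n \<and> s \<le> j \<and> j < 2*n \<longrightarrow>
                    norm (gauss ?B s i j) \<le> norm (gauss ?B s s s)"
  proof (intro allI impI)
    fix s i j assume s: "s < 2*n" and ij: "s \<le> i \<and> i < 2*n \<and> s \<le> j \<and> j < 2*n"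
    define k where "k = s div 2"
    have kn: "k < n" using s k_def by auto
    have ik: "k \<le> i div 2" "i div 2 < n" "k \<le> j div 2" "j div 2 < n" using ij k_def by auto
    have bnd: "norm (gauss A k I J) \<le> norm (gauss A k k k)" if "k \<le> I" "I < n" "k \<le> J" "J < n" for I J
      using Ad kn that by blast
    from split[of s] show "norm (gauss ?B s i j) \<le> norm (gauss ?B s s s)"
    proof
      assume h: "s = 2*(s div 2)"
      have hs: "s = 2*k" using h k_def by simp
      show ?thesis using bnd[OF ik] ev[of k] unfolding hs
        by (simp add: gauss_kron_even norm_mult)
    next
      assume h: "s = Suc (2*(s div 2))"
      have hs: "s = Suc (2*k)" using h k_def by simp
      have nz: "gauss A k k k \<noteq> 0" using piv kn by blast
      have "norm (gauss ?B s i j) \<le> norm (gauss A k (i div 2) (j div 2))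
             + norm (gauss A k (i div 2) k) * norm (gauss A k k (j div 2)) / norm (gauss A k k k)"
        unfolding hs gauss_kron_odd
        by (metis (no_types, lifting) norm_divide norm_hmat norm_mult norm_triangle_ineq4 mult.right_neutral)
      also have "\<dots> \<le> norm (gauss A k k k) + norm (gauss A k k k) * norm (gauss A k k k) / norm (gauss A k k k)"
        apply (intro add_mono divide_right_mono mult_mono bnd)
        using ik kn by auto
      also have "\<dots> = norm (gauss ?B s s s)"
        using nz od[OF nz] unfolding hs by simp
      finally show ?thesis .
    qed
  qed
  show ?thesis unfolding CP_def using c1 c2 c3 c4 c5 by blast
qed



definition bord :: "complex \<Rightarrow> cmat \<Rightarrow> cmat" where
  "bord c M i j = (if i = 0 \<and> j = 0 then c else if i = 0 \<or> j = 0 then 0 else M (i-1) (j-1))"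

lemma gauss_bord: "gauss (bord c A) (Suc k) (Suc i) (Suc j) = gauss A k i j"
proof (induction k arbitrary: i j)
  case 0
  then show ?case by (simp add: bord_def)
next
  case (Suc k)
  show ?case
    by (subst gauss.simps(2)) (simp only: Suc.IH gauss.simps(2)[of A k])
qed

lemma bord_inv:
  assumes inv: "invertible_mat n A" and c: "c \<noteq> 0"
  shows "invertible_mat (Suc n) (bord c A)"
proof -
  from inv obtain A' where A': "\<forall>i<n. \<forall>j<n. (\<Sum>l<n. A i l * A' l j) = (if i = j then 1 else 0)"
    unfolding invertible_mat_def by blast
  have "(\<Sum>l<Suc n. bord c A i l * bord (1/c) A' l j) = (if i = j then 1 else 0)"
    if "i < Suc n" "j < Suc n" for i j
  proof (cases "i = 0 \<or> j = 0")
    case True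
    then show ?thesis using c unfolding sum.lessThan_Suc_shift by (auto simp: bord_def)
  next
    case False
    then obtain i' j' where ij: "i = Suc i'" "j = Suc j'" by (metis not0_implies_Suc)
    then show ?thesis using that A' unfolding sum.lessThan_Suc_shift by (auto simp: bord_def)
  qed
  then show ?thesis unfolding invertible_mat_def by blast
qed

lemma bord_CP:
  assumes S: "S = \<real> \<or> S = UNIV" and A: "A \<in> CP n S" and n: "1 \<le> n"
  shows "bord (A 0 0) A \<in> CP (Suc n) S"
proof -
  note Ad = A[unfolded CP_def, simplified]
  let ?B = "bord (A 0 0) A"
  have piv: "gauss A k k k \<noteq> 0" if "k < n" for k using Ad that unfolding elim_defined_def by blast
  have a0: "A 0 0 \<noteq> 0" using piv[of 0] n by simp
  have zS: "0 \<in> S" using S by auto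
  have a0S: "A 0 0 \<in> S" using Ad n by auto
  have c1: "\<forall>i<Suc n. \<forall>j<Suc n. ?B i j \<in> S"
    using Ad zS a0S by (auto simp: bord_def)
  have c2: "\<forall>i j. (Suc n \<le> i \<or> Suc n \<le> j) \<longrightarrow> ?B i j = 0"
    using Ad by (auto simp: bord_def)
  have c3: "invertible_mat (Suc n) ?B" using bord_inv Ad a0 by blast
  have c4: "elim_defined (Suc n) ?B"
    unfolding elim_defined_def
  proof (intro allI impI)
    fix s assume s: "s < Suc n"
    show "gauss ?B s s s \<noteq> 0"
    proof (cases s)
      case 0 then show ?thesis using a0 by (simp add: bord_def)
    next
      case (Suc k) then show ?thesis using piv s by (simp del: gauss.simps add: gauss_bord)
    qed
  qed
  have b0: "norm (A i j) \<le> norm (A 0 0)" if "i < n" "j < n" for i j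
    using Ad[THEN conjunct2, THEN conjunct2, THEN conjunct2, THEN conjunct2, rule_format, of 0 i j] that n by simp
  have c5: "\<forall>s<Suc n. \<forall>i j. s \<le> i \<and> i < Suc n \<and> s \<le> j \<and> j < Suc n \<longrightarrow>
                    norm (gauss ?B s i j) \<le> norm (gauss ?B s s s)"
  proof (intro allI impI)
    fix s i j assume s: "s < Suc n" and ij: "s \<le> i \<and> i < Suc n \<and> s \<le> j \<and> j < Suc n"
    show "norm (gauss ?B s i j) \<le> norm (gauss ?B s s s)"
    proof (cases s)
      case 0 then show ?thesis using ij b0 by (auto simp: bord_def)
    next
      case (Suc k)
      then obtain i' j' where ij': "i = Suc i'" "j = Suc j'" using ij by (metis Suc_le_D)
      then show ?thesis using Suc ij s Ad by (simp del: gauss.simps add: gauss_bord)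
    qed
  qed
  show ?thesis unfolding CP_def using c1 c2 c3 c4 c5 by blast
qed



abbreviation SG :: "nat \<Rightarrow> cmat \<Rightarrow> real set" where
  "SG n A \<equiv> {norm (gauss A k i j) | k i j. k < n \<and> k \<le> i \<and> i < n \<and> k \<le> j \<and> j < n}"
abbreviation SE :: "nat \<Rightarrow> cmat \<Rightarrow> real set" where
  "SE n A \<equiv> {norm (A i j) | i j. i < n \<and> j < n}"

lemma SE_ne: "1 \<le> n \<Longrightarrow> SE n A \<noteq> {}" by force
lemma SG_ne: "1 \<le> n \<Longrightarrow> SG n A \<noteq> {}" by force

lemma SE_ge0: "1 \<le> n \<Longrightarrow> 0 \<le> Max (SE n A)"
proof -
  assume n: "1 \<le> n"
  have "norm (A 0 0) \<in> SE n A" using n by force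
  then have "norm (A 0 0) \<le> Max (SE n A)" by (intro Max_ge fin_entries)
  then show ?thesis by (meson norm_ge_zero order_trans)
qed

lemma growth_kron:
  assumes A: "A \<in> CP n S" and n: "1 \<le> n"
  shows "2 * growth n A \<le> growth (2*n) (kronH A)"
proof -
  note Ad = A[unfolded CP_def, simplified]
  let ?B = "kronH A"
  have n2: "1 \<le> 2*n" using n by simp
  have D: "Max (SE (2*n) ?B) = Max (SE n A)"
  proof (rule antisym)
    show "Max (SE (2*n) ?B) \<le> Max (SE n A)"
    proof (subst Max_le_iff[OF fin_entries SE_ne[OF n2]], intro ballI)
      fix x assume "x \<in> SE (2*n) ?B"
      then obtain i j where x: "x = norm (?B i j)" "i < 2*n" "j < 2*n" by auto
      then have "i div 2 < n" "j div 2 < n" by auto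
      moreover have "x = norm (A (i div 2) (j div 2))" using x by (simp add: kronH_def norm_mult)
      ultimately have "x \<in> SE n A" by blast
      then show "x \<le> Max (SE n A)" by (intro Max_ge fin_entries)
    qed
  next
    show "Max (SE n A) \<le> Max (SE (2*n) ?B)"
    proof (subst Max_le_iff[OF fin_entries SE_ne[OF n]], intro ballI)
      fix x assume "x \<in> SE n A"
      then obtain i j where x: "x = norm (A i j)" "i < n" "j < n" by auto
      then have "x = norm (?B (2*i) (2*j))" by (simp add: kronH_def hmat_def)
      moreover have "2*i < 2*n" "2*j < 2*n" using x by auto
      ultimately have "x \<in> SE (2*n) ?B" by blast
      then show "x \<le> Max (SE (2*n) ?B)" by (intro Max_ge fin_entries)
    qed
  qed
  have M: "2 * Max (SG n A) \<le> Max (SG (2*n) ?B)"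
  proof -
    have "Max (SG n A) \<in> SG n A" by (intro Max_in fin_stage SG_ne n)
    then obtain k i j where kij: "Max (SG n A) = norm (gauss A k i j)"
      "k < n" "k \<le> i" "i < n" "k \<le> j" "j < n" by auto
    then have le: "Max (SG n A) \<le> norm (gauss A k k k)" using Ad by auto
    have nz: "gauss A k k k \<noteq> 0" using Ad kij unfolding elim_defined_def by auto
    have "Suc (2*k) div 2 = k" "Suc (2*k) mod 2 = 1" by presburger+
    then have od: "gauss ?B (Suc (2*k)) (Suc (2*k)) (Suc (2*k)) = - 2 * gauss A k k k"
      using nz by (simp del: gauss.simps add: gauss_kron_odd hmat_def)
    have "norm (gauss ?B (Suc (2*k)) (Suc (2*k)) (Suc (2*k))) \<in> SG (2*n) ?B"
      using kij by fastforce
    then have "norm (gauss ?B (Suc (2*k)) (Suc (2*k)) (Suc (2*k))) \<le> Max (SG (2*n) ?B)"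
      by (intro Max_ge fin_stage)
    then show ?thesis using le od by (simp add: norm_mult)
  qed
  have D0: "0 \<le> Max (SE n A)" using SE_ge0[OF n] .
  show ?thesis unfolding growth_def D
    using divide_right_mono[OF M D0] by simp
qed

lemma growth_bord:
  assumes A: "A \<in> CP n S" and n: "1 \<le> n"
  shows "growth n A \<le> growth (Suc n) (bord (A 0 0) A)"
proof -
  note Ad = A[unfolded CP_def, simplified]
  let ?B = "bord (A 0 0) A"
  have n2: "1 \<le> Suc n" using n by simp
  have D: "Max (SE (Suc n) ?B) = Max (SE n A)"
  proof (rule antisym)
    show "Max (SE (Suc n) ?B) \<le> Max (SE n A)"
    proof (subst Max_le_iff[OF fin_entries SE_ne[OF n2]], intro ballI)
      fix x assume "x \<in> SE (Suc n) ?B"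
      then obtain i j where x: "x = norm (?B i j)" "i < Suc n" "j < Suc n" by auto
      have a00: "norm (A 0 0) \<le> Max (SE n A)" using n by (intro Max_ge fin_entries) force
      show "x \<le> Max (SE n A)"
      proof (cases "i = 0 \<or> j = 0")
        case True
        have m0: "0 \<le> Max (SE n A)" using a00 by (meson norm_ge_zero order_trans)
        then show ?thesis using True x a00 by (auto simp: bord_def)
      next
        case False
        then have "i - 1 < n" "j - 1 < n" "x = norm (A (i-1) (j-1))" using x by (auto simp: bord_def)
        then have "x \<in> SE n A" by blast
        then show ?thesis by (intro Max_ge fin_entries)
      qed
    qed
  next
    show "Max (SE n A) \<le> Max (SE (Suc n) ?B)"
    proof (subst Max_le_iff[OF fin_entries SE_ne[OF n]], intro ballI)
      fix x assume "x \<in> SE n A"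
      then obtain i j where x: "x = norm (A i j)" "i < n" "j < n" by auto
      then have "x = norm (?B (Suc i) (Suc j))" by (simp add: bord_def)
      moreover have "Suc i < Suc n" "Suc j < Suc n" using x by auto
      ultimately have "x \<in> SE (Suc n) ?B" by blast
      then show "x \<le> Max (SE (Suc n) ?B)" by (intro Max_ge fin_entries)
    qed
  qed
  have M: "Max (SG n A) \<le> Max (SG (Suc n) ?B)"
  proof -
    have "Max (SG n A) \<in> SG n A" by (intro Max_in fin_stage SG_ne n)
    then obtain k i j where kij: "Max (SG n A) = norm (gauss A k i j)"
      "k < n" "k \<le> i" "i < n" "k \<le> j" "j < n" by auto
    have "norm (gauss ?B (Suc k) (Suc i) (Suc j)) \<in> SG (Suc n) ?B"
      using kij by fastforce
    then have "norm (gauss ?B (Suc k) (Suc i) (Suc j)) \<le> Max (SG (Suc n) ?B)"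
      by (intro Max_ge fin_stage)
    then show ?thesis using kij by (simp del: gauss.simps add: gauss_bord)
  qed
  have D0: "0 \<le> Max (SE n A)" using SE_ge0[OF n] .
  show ?thesis unfolding growth_def D
    using divide_right_mono[OF M D0] by simp
qed



lemma partial_bound:
  fixes x :: real assumes x0: "0 \<le> x" and x1: "x \<le> 1"
  shows "(\<Prod>i\<le>N. 1 - x * (1/2)^i) \<le> (1 - x) * (1 + x * (1/2)^N) / (1 + x)"
proof (induction N)
  case 0
  then show ?case using x0 by simp
next
  case (Suc N)
  define y :: real where "y = (1/2)^N"
  have y0: "0 \<le> y" "y \<le> 1" unfolding y_def by (simp_all add: power_le_one)
  have f0: "0 \<le> 1 - x * (1/2)^Suc N" using x0 x1 y0 unfolding y_def[symmetric] by (simp add: y_def[symmetric]) (smt (verit) mult_le_one)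
  have "(\<Prod>i\<le>Suc N. 1 - x * (1/2)^i) = (\<Prod>i\<le>N. 1 - x * (1/2)^i) * (1 - x * (1/2)^Suc N)"
    by simp
  also have "\<dots> \<le> (1 - x) * (1 + x * (1/2)^N) / (1 + x) * (1 - x * (1/2)^Suc N)"
    by (rule mult_right_mono[OF Suc.IH f0])
  also have "\<dots> = (1 - x) * ((1 + x * y) * (1 - x * y / 2)) / (1 + x)"
    by (simp add: y_def field_simps)
  also have "\<dots> \<le> (1 - x) * (1 + x * y / 2) / (1 + x)"
  proof -
    have "(1 + x * y) * (1 - x * y / 2) \<le> 1 + x * y / 2"
    proof -
      have e: "(1 + x*y)*(1 - x*y/2) = 1 + x*y/2 - (x*y)^2/2"
        by (simp add: power2_eq_square field_simps)
      have "0 \<le> (x*y)^2/2" by simp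
      then show ?thesis using e by linarith
    qed
    then show ?thesis using x0 x1
      by (intro divide_right_mono mult_left_mono) auto
  qed
  also have "\<dots> = (1 - x) * (1 + x * (1/2)^Suc N) / (1 + x)"
    by (simp add: y_def field_simps)
  finally show ?case .
qed

lemma qbound:
  assumes k: "(2::nat) \<le> k"
  shows "qpoch_inf (1 / real k) (1 / 2) / (1 - 1 / real k) \<le> real k / (real k + 1)"
proof -
  define x :: real where "x = 1 / real k"
  have x0: "0 < x" and x1: "x \<le> 1/2" using k unfolding x_def by (auto simp: field_simps)
  define f where "f i = 1 - x * (1/2)^i" for i :: nat
  have sm: "summable (\<lambda>i. norm (f i - 1))"
  proof -
    have "summable (\<lambda>i. x * (1/2::real)^i)" by (intro summable_mult summable_geometric) simp
    moreover have "norm (f i - 1) = x * (1/2)^i" for i using x0 by (simp add: f_def)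
    ultimately show ?thesis by simp
  qed
  have cp: "convergent_prod f"
    by (rule abs_convergent_prod_imp_convergent_prod[OF summable_imp_abs_convergent_prod[OF sm]])
  have L: "(\<lambda>N. \<Prod>i\<le>N. f i) \<longlonglongrightarrow> prodinf f" by (rule convergent_prod_LIMSEQ[OF cp])
  have Y: "(\<lambda>N. (1 - x) * (1 + x * (1/2)^N) / (1 + x)) \<longlonglongrightarrow> (1 - x) * (1 + x * 0) / (1 + x)"
    by (intro tendsto_intros LIMSEQ_realpow_zero) (use x0 in auto)
  have "prodinf f \<le> (1 - x) * (1 + x * 0) / (1 + x)"
    by (rule LIMSEQ_le[OF L Y]) (use partial_bound[of x] x0 x1 in \<open>auto simp: f_def\<close>)
  then have "prodinf f / (1 - x) \<le> (1 - x) / (1 + x) / (1 - x)"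
    using x1 by (intro divide_right_mono) auto
  also have "\<dots> = 1 / (1 + x)" using x1 by simp
  also have "\<dots> = real k / (real k + 1)"
    using k unfolding x_def by (simp add: field_simps)
  finally show ?thesis unfolding qpoch_inf_def f_def x_def .
qed

lemma decomp:
  fixes k n :: nat
  assumes "1 \<le> k" "k \<le> n"
  shows "\<exists>j (m::nat). k \<le> m \<and> m < 2*k \<and> 2^j*m \<le> n \<and> n < 2^j*(m+1)"
  using assms(2)
proof (induction n rule: less_induct)
  case (less n)
  show ?case
  proof (cases "n < 2*k")
    case True
    then show ?thesis using less.prems by (intro exI[of _ 0] exI[of _ n]) auto
  next
    case False
    have "k \<le> n div 2" "n div 2 < n" using False assms(1) by auto
    then obtain j m where jm: "k \<le> m" "m < 2*k" "2^j*m \<le> n div 2" "n div 2 < 2^j*(m+1)"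
      using less.IH by blast
    have "2^Suc j * m \<le> n" using jm(3) by simp
    moreover have "n < 2^Suc j * (m+1)"
    proof -
      have "n div 2 + 1 \<le> 2^j*(m+1)" using jm(4) by simp
      then have "2 * (n div 2 + 1) \<le> 2 * (2^j*(m+1))" by simp
      moreover have "n < 2 * (n div 2 + 1)" by simp
      ultimately show ?thesis by simp
    qed
    ultimately show ?thesis using jm by blast
  qed
qed



lemma growth_nonneg: "1 \<le> n \<Longrightarrow> 0 \<le> growth n A"
proof -
  assume n: "1 \<le> n"
  have "norm (gauss A 0 0 0) \<in> SG n A" using n by force
  then have "norm (gauss A 0 0 0) \<le> Max (SG n A)" by (intro Max_ge fin_stage)
  then have "0 \<le> Max (SG n A)" by (meson norm_ge_zero order_trans)
  then show ?thesis unfolding growth_def using SE_ge0[OF n] by simp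
qed

lemma mono_step:
  assumes S: "S = \<real> \<or> S = UNIV" and n: "1 \<le> n"
  shows "growth_sup n (CP n S) \<le> growth_sup (Suc n) (CP (Suc n) S)"
  unfolding growth_sup_def
proof (rule SUP_least)
  fix A assume A: "A \<in> CP n S"
  have "ereal (growth n A) \<le> ereal (growth (Suc n) (bord (A 0 0) A))"
    using growth_bord[OF A n] by simp
  also have "\<dots> \<le> (SUP B\<in>CP (Suc n) S. ereal (growth (Suc n) B))"
    by (rule SUP_upper) (rule bord_CP[OF S A n])
  finally show "ereal (growth n A) \<le> (SUP B\<in>CP (Suc n) S. ereal (growth (Suc n) B))" .
qed

lemma mono_gs:
  assumes S: "S = \<real> \<or> S = UNIV" and n: "1 \<le> n" and nm: "n \<le> m"
  shows "growth_sup n (CP n S) \<le> growth_sup m (CP m S)"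
  using nm
proof (induction m rule: dec_induct)
  case base then show ?case by simp
next
  case (step m)
  then show ?case using mono_step[OF S, of m] n by (meson order_trans)
qed

lemma double_gs:
  assumes S: "S = \<real> \<or> S = UNIV" and n: "1 \<le> n"
  shows "2 * growth_sup n (CP n S) \<le> growth_sup (2*n) (CP (2*n) S)"
proof (cases "CP n S = {}")
  case True
  then show ?thesis by (simp add: growth_sup_def bot_ereal_def)
next
  case False
  have "2 * growth_sup n (CP n S) = (SUP A\<in>CP n S. 2 * ereal (growth n A))"
    unfolding growth_sup_def
    by (rule SUP_ereal_mult_left[symmetric]) (use False growth_nonneg[OF n] in auto)
  also have "\<dots> \<le> growth_sup (2*n) (CP (2*n) S)"
    unfolding growth_sup_def
  proof (rule SUP_least)
    fix A assume A: "A \<in> CP n S"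
    have "2 * ereal (growth n A) \<le> ereal (growth (2*n) (kronH A))"
      using growth_kron[OF A n] by simp
    also have "\<dots> \<le> (SUP B\<in>CP (2*n) S. ereal (growth (2*n) B))"
      by (rule SUP_upper) (rule kron_CP[OF S A])
    finally show "2 * ereal (growth n A) \<le> (SUP B\<in>CP (2*n) S. ereal (growth (2*n) B))" .
  qed
  finally show ?thesis .
qed

lemma pow_gs:
  assumes S: "S = \<real> \<or> S = UNIV" and m: "1 \<le> m" and C: "0 \<le> C"
    and h: "ereal (C * real m) \<le> growth_sup m (CP m S)"
  shows "ereal (2^j * C * real m) \<le> growth_sup (2^j * m) (CP (2^j * m) S)"
proof (induction j)
  case 0 then show ?case using h by simp
next
  case (Suc j)
  have "ereal (2^Suc j * C * real m) = 2 * ereal (2^j * C * real m)" by simp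
  also have "\<dots> \<le> 2 * growth_sup (2^j * m) (CP (2^j * m) S)"
    by (rule ereal_mult_left_mono[OF Suc.IH]) simp
  also have "\<dots> \<le> growth_sup (2 * (2^j * m)) (CP (2 * (2^j * m)) S)"
    by (rule double_gs[OF S]) (use m in simp)
  also have "2 * (2^j * m) = 2^Suc j * m" by simp
  finally show ?case .
qed

theorem mainTheorem10:
  fixes S :: "complex set"
  assumes "S = \<real> \<or> S = UNIV"
  shows "(\<forall>n m. 1 \<le> n \<and> n \<le> m \<longrightarrow> growth_sup n (CP n S) \<le> growth_sup m (CP m S))
       \<and> (\<forall>n\<ge>1. growth_sup (2 * n) (CP (2 * n) S) \<ge> 2 * growth_sup n (CP n S))
       \<and> (\<forall>(k::nat) (C::real). k \<ge> 2 \<and> C > 0 \<and>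
             (\<forall>n. k \<le> n \<and> n \<le> 2 * k - 1 \<longrightarrow> growth_sup n (CP n S) \<ge> ereal (C * real n))
           \<longrightarrow> (\<forall>n\<ge>k. growth_sup n (CP n S) \<ge>
                 ereal (qpoch_inf (1 / real k) (1 / 2) / (1 - 1 / real k) * C * real n)))"
proof (intro conjI allI impI)
  fix n m :: nat assume "1 \<le> n \<and> n \<le> m"
  then show "growth_sup n (CP n S) \<le> growth_sup m (CP m S)" using mono_gs[OF assms] by blast
next
  fix n :: nat assume "1 \<le> n"
  then show "2 * growth_sup n (CP n S) \<le> growth_sup (2 * n) (CP (2 * n) S)"
    using double_gs[OF assms] by blast
next
  fix k :: nat and C :: real and n :: nat
  assume H: "2 \<le> k \<and> 0 < C \<and>
             (\<forall>n. k \<le> n \<and> n \<le> 2 * k - 1 \<longrightarrow> ereal (C * real n) \<le> growth_sup n (CP n S))"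
    and nk: "k \<le> n"
  have k: "2 \<le> k" and C: "0 < C" using H by auto
  obtain j m where jm: "k \<le> m" "m < 2*k" "2^j*m \<le> n" "n < 2^j*(m+1)"
    using decomp[of k n] k nk by auto
  have hm: "ereal (C * real m) \<le> growth_sup m (CP m S)" using H jm by auto
  have m1: "1 \<le> m" using jm k by simp
  have nat_ineq: "k * n \<le> (k + 1) * (2^j * m)"
  proof -
    have "k * n \<le> k * (2^j * (m+1))" using jm(4) by simp
    also have "\<dots> = 2^j * (k * (m+1))" by (simp add: algebra_simps)
    also have "\<dots> \<le> 2^j * ((k+1) * m)" using jm(1) by (intro mult_le_mono2) (simp add: algebra_simps)
    also have "\<dots> = (k + 1) * (2^j * m)" by (simp add: algebra_simps)
    finally show ?thesis .
  qed
  have real_ineq: "real k * real n \<le> (real k + 1) * (2^j * real m)"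
    using nat_ineq by (metis (mono_tags, lifting) of_nat_1 of_nat_add of_nat_le_iff of_nat_mult of_nat_numeral of_nat_power)
  have Cn: "0 \<le> C * real n" using C by simp
  have "qpoch_inf (1 / real k) (1 / 2) / (1 - 1 / real k) * C * real n
        \<le> real k / (real k + 1) * (C * real n)"
    using mult_right_mono[OF qbound[OF k] Cn] by (simp add: mult.assoc)
  also have "\<dots> = C * (real k * real n / (real k + 1))" by (simp add: field_simps)
  also have "\<dots> \<le> C * (2^j * real m)"
    using real_ineq C by (intro mult_left_mono) (simp_all add: field_simps)
  finally have r: "qpoch_inf (1 / real k) (1 / 2) / (1 - 1 / real k) * C * real n \<le> 2^j * C * real m"
    by (simp add: mult_ac)
  have "ereal (qpoch_inf (1 / real k) (1 / 2) / (1 - 1 / real k) * C * real n) \<le> ereal (2^j * C * real m)"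
    using r by simp
  also have "\<dots> \<le> growth_sup (2^j * m) (CP (2^j * m) S)"
    by (rule pow_gs[OF assms m1 _ hm]) (use C in simp)
  also have "\<dots> \<le> growth_sup n (CP n S)"
    by (rule mono_gs[OF assms _ jm(3)]) (use m1 in simp)
  finally show "ereal (qpoch_inf (1 / real k) (1 / 2) / (1 - 1 / real k) * C * real n) \<le> growth_sup n (CP n S)" .
qed


end
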